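(* Let $\mathcal{R}$ be a cell space, let $A\subseteq M$, and let $E,E'\subseteq G/G_0$ satisfy $\{g^{-1}\cdot e': e,e'\in E,\ g\in e\}\subseteq E'$. Then for every $m\in M$ we have $m\triangleleft E\subseteq M\setminus A$ or $m\triangleleft E\subseteq A^{+E'}$.
   Context: A cell space $\mathcal{R}$ consists of a group $G$ acting transitively on the left on a nonempty set $M$ via $\triangleright$, a point $m_0\in M$ and a family $(g_{m_0,m})_{m\in M}$ in $G$ with $g_{m_0,m}\triangleright m_0=m$. $G_0$ is the stabiliser of $m_0$, $G/G_0$ the set of left cosets (elements are subsets of $G$), with $G$ acting by $g\cdot hG_0=ghG_0$. The right semi-action $\triangleleft\colon M\times G/G_0\to M$ is $m\triangleleft gG_0=g_{m_0,m}g\triangleright m_0$; $m\triangleleft E=\{m\triangleleft e:e\in E\}$. For $A\subseteq M$, $A^{+E'}=\{m\in M:(m\triangleleft E')\cap A\neq\emptyset\}$. *)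

theory Defs
  imports "HOL-Algebra.Group_Action" "HOL-Algebra.Left_Coset"
begin

definition cell_space ::
  "('g, 'b) monoid_scheme \<Rightarrow> 'm set \<Rightarrow> ('g \<Rightarrow> 'm \<Rightarrow> 'm) \<Rightarrow> 'm \<Rightarrow> ('m \<Rightarrow> 'g) \<Rightarrow> bool" where
  "cell_space G M act m0 gf \<longleftrightarrow>
     transitive_action G M act \<and> M \<noteq> {} \<and> m0 \<in> M \<and>
     (\<forall>m\<in>M. gf m \<in> carrier G \<and> act (gf m) m0 = m)"

definition quot_cosets ::
  "('g, 'b) monoid_scheme \<Rightarrow> ('g \<Rightarrow> 'm \<Rightarrow> 'm) \<Rightarrow> 'm \<Rightarrow> 'g set set" where
  "quot_cosets G act m0 = lcosets\<^bsub>G\<^esub> (stabilizer G act m0)"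

text \<open>Right semi-action m \<triangleleft> gG0 = (gf m \<otimes> g) \<triangleright> m0, computed with a representative g of the coset
  (independent of the choice, since G0 stabilises m0).\<close>
definition semi_act ::
  "('g, 'b) monoid_scheme \<Rightarrow> ('g \<Rightarrow> 'm \<Rightarrow> 'm) \<Rightarrow> 'm \<Rightarrow> ('m \<Rightarrow> 'g) \<Rightarrow> 'm \<Rightarrow> 'g set \<Rightarrow> 'm" where
  "semi_act G act m0 gf m e = act (gf m \<otimes>\<^bsub>G\<^esub> (SOME g. g \<in> e)) m0"

definition dilation ::
  "('g, 'b) monoid_scheme \<Rightarrow> 'm set \<Rightarrow> ('g \<Rightarrow> 'm \<Rightarrow> 'm) \<Rightarrow> 'm \<Rightarrow> ('m \<Rightarrow> 'g) \<Rightarrow> 'm set \<Rightarrow> 'g set set \<Rightarrow> 'm set" where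
  "dilation G M act m0 gf A E' = {m \<in> M. semi_act G act m0 gf m ` E' \<inter> A \<noteq> {}}"

end

theory Submission
  imports Defs
begin

lemma act_one:
  assumes "group_action G M act" "x \<in> M"
  shows "act \<one>\<^bsub>G\<^esub> x = x"
  using group_action.id_eq_one[OF assms(1)] assms(2) by (metis restrict_apply')

lemma coset_rep:
  assumes ga: "group_action G M act" and m0: "m0 \<in> M"
    and a: "a \<in> carrier G" and z: "z \<in> carrier G"
    and y: "y \<in> z <#\<^bsub>G\<^esub> stabilizer G act m0"
  shows "act (a \<otimes>\<^bsub>G\<^esub> y) m0 = act (a \<otimes>\<^bsub>G\<^esub> z) m0"
proof -
  have grp: "group G" using ga unfolding group_action_def group_hom_def group_hom_axioms_def by blast
  obtain h where h: "h \<in> stabilizer G act m0" "y = z \<otimes>\<^bsub>G\<^esub> h"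
    using y unfolding l_coset_def by blast
  have hc: "h \<in> carrier G" and hm: "act h m0 = m0" using h(1) unfolding stabilizer_def by auto
  have "act (a \<otimes>\<^bsub>G\<^esub> y) m0 = act ((a \<otimes>\<^bsub>G\<^esub> z) \<otimes>\<^bsub>G\<^esub> h) m0"
    using h(2) a z hc grp by (simp add: monoid.m_assoc group.is_monoid)
  also have "\<dots> = act (a \<otimes>\<^bsub>G\<^esub> z) (act h m0)"
    using group_action.composition_rule[OF ga m0] a z hc grp by (simp add: monoid.m_closed group.is_monoid)
  finally show ?thesis using hm by simp
qed

theorem lemmaX:
  assumes "cell_space G M act m0 gf"
    and "A \<subseteq> M"
    and "E \<subseteq> quot_cosets G act m0" and "E' \<subseteq> quot_cosets G act m0"
    and "{inv\<^bsub>G\<^esub> g <#\<^bsub>G\<^esub> e' | e e' g. e \<in> E \<and> e' \<in> E \<and> g \<in> e} \<subseteq> E'"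
    and "m \<in> M"
  shows "semi_act G act m0 gf m ` E \<subseteq> M - A
         \<or> semi_act G act m0 gf m ` E \<subseteq> dilation G M act m0 gf A E'"
proof -
  let ?S = "stabilizer G act m0"
  have ta: "transitive_action G M act" and m0: "m0 \<in> M"
    and gf: "\<And>x. x \<in> M \<Longrightarrow> gf x \<in> carrier G \<and> act (gf x) m0 = x"
    using assms(1) unfolding cell_space_def by auto
  have ga: "group_action G M act" using ta unfolding transitive_action_def by blast
  have grp: "group G" using ga unfolding group_action_def group_hom_def group_hom_axioms_def by blast
  interpret group G by (rule grp)
  have sub: "subgroup ?S G" using group_action.stabilizer_subgroup[OF ga m0] .
  have Sc: "?S \<subseteq> carrier G" using sub subgroup.subset by blast
  have sa: "semi_act G act m0 gf x e = act (gf x \<otimes>\<^bsub>G\<^esub> z) m0 \<and> (SOME g. g \<in> e) \<in> e"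
    if "x \<in> M" "z \<in> carrier G" "e = z <#\<^bsub>G\<^esub> ?S" for x z e
  proof -
    have "z \<in> e" using group.lcos_self[OF grp that(2) sub] that(3) by simp
    hence s: "(SOME g. g \<in> e) \<in> e" by (rule someI)
    show ?thesis unfolding semi_act_def
      using coset_rep[OF ga m0 _ that(2), of "gf x" "SOME g. g \<in> e"] s that gf by auto
  qed
  have inM: "semi_act G act m0 gf x e \<in> M" if xe: "x \<in> M" "e \<in> quot_cosets G act m0" for x e
  proof -
    obtain z where z: "z \<in> carrier G" "e = z <#\<^bsub>G\<^esub> ?S"
      using xe(2) unfolding quot_cosets_def LCOSETS_def by blast
    show ?thesis using sa[OF xe(1) z] group_action.element_image[OF ga _ m0] gf[OF xe(1)] z(1) grp
      by (metis monoid.m_closed group.is_monoid)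
  qed
  show ?thesis
  proof (cases "semi_act G act m0 gf m ` E \<subseteq> M - A")
    case True thus ?thesis by blast
  next
    case False
    from False obtain e' where e': "e' \<in> E" "semi_act G act m0 gf m e' \<in> A"
      using inM[OF assms(6)] assms(3) by blast
    obtain z' where z': "z' \<in> carrier G" "e' = z' <#\<^bsub>G\<^esub> ?S"
      using e'(1) assms(3) unfolding quot_cosets_def LCOSETS_def by blast
    have gm: "gf m \<in> carrier G" "act (gf m) m0 = m" using gf[OF assms(6)] by auto
    have "semi_act G act m0 gf m ` E \<subseteq> dilation G M act m0 gf A E'"
    proof
      fix n assume "n \<in> semi_act G act m0 gf m ` E"
      then obtain e where e: "e \<in> E" "n = semi_act G act m0 gf m e" by blast
      obtain z where z: "z \<in> carrier G" "e = z <#\<^bsub>G\<^esub> ?S"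
        using e(1) assms(3) unfolding quot_cosets_def LCOSETS_def by blast
      have nM: "n \<in> M" using inM assms(3) e assms(6) by blast
      have nz: "n = act (gf m \<otimes>\<^bsub>G\<^esub> z) m0" using sa[OF assms(6) z] e(2) by simp
      have gn: "gf n \<in> carrier G" "act (gf n) m0 = n" using gf[OF nM] by auto
      define g where "g = inv\<^bsub>G\<^esub> (gf m) \<otimes>\<^bsub>G\<^esub> gf n"
      have gc: "g \<in> carrier G" unfolding g_def using gm gn grp by simp
      have izc: "inv\<^bsub>G\<^esub> z \<in> carrier G" using z grp by simp
      have igm: "inv\<^bsub>G\<^esub> gf m \<in> carrier G" using gm grp by simp
      have "act g m0 = act (inv\<^bsub>G\<^esub> gf m) n"
        unfolding g_def using group_action.composition_rule[OF ga m0 igm gn(1)] gn by simp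
      also have "\<dots> = act (inv\<^bsub>G\<^esub> gf m) (act (gf m) (act z m0))"
        using nz group_action.composition_rule[OF ga m0 gm(1) z(1)] by simp
      also have "\<dots> = act z m0"
        using group_action.composition_rule[OF ga _ igm gm(1), of "act z m0"]
          group_action.element_image[OF ga z(1) m0] act_one[OF ga] grp gm
        by (metis group.l_inv)
      finally have gz: "act g m0 = act z m0" .
      have "act (inv\<^bsub>G\<^esub> z \<otimes>\<^bsub>G\<^esub> g) m0 = act (inv\<^bsub>G\<^esub> z) (act z m0)"
        using group_action.composition_rule[OF ga m0 izc gc] gz by simp
      also have "\<dots> = m0"
        using group_action.composition_rule[OF ga m0 izc z(1)] act_one[OF ga m0] grp z(1)
        by (metis group.l_inv)
      finally have "inv\<^bsub>G\<^esub> z \<otimes>\<^bsub>G\<^esub> g \<in> ?S"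
        unfolding stabilizer_def using izc gc grp by simp
      moreover have "g = z \<otimes>\<^bsub>G\<^esub> (inv\<^bsub>G\<^esub> z \<otimes>\<^bsub>G\<^esub> g)"
        using z(1) gc grp by (metis group.inv_solve_left izc monoid.m_closed group.is_monoid)
      ultimately have ge: "g \<in> e" unfolding z(2) l_coset_def by blast
      define e'' where "e'' = inv\<^bsub>G\<^esub> g <#\<^bsub>G\<^esub> e'"
      have "e'' \<in> E'" using assms(5) e(1) e'(1) ge unfolding e''_def by blast
      have igc: "inv\<^bsub>G\<^esub> g \<in> carrier G" using gc grp by simp
      have wc: "inv\<^bsub>G\<^esub> g \<otimes>\<^bsub>G\<^esub> z' \<in> carrier G" using igc z'(1) grp by simp
      have e''c: "e'' = (inv\<^bsub>G\<^esub> g \<otimes>\<^bsub>G\<^esub> z') <#\<^bsub>G\<^esub> ?S"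
        unfolding e''_def z'(2) using group.lcos_m_assoc[OF grp Sc igc z'(1)] .
      have eqX: "gf n \<otimes>\<^bsub>G\<^esub> (inv\<^bsub>G\<^esub> g \<otimes>\<^bsub>G\<^esub> z') = gf m \<otimes>\<^bsub>G\<^esub> z'"
      proof -
        have "inv\<^bsub>G\<^esub> g = inv\<^bsub>G\<^esub> gf n \<otimes>\<^bsub>G\<^esub> gf m"
          unfolding g_def using grp gm gn by (simp add: group.inv_mult_group)
        thus ?thesis using grp gm gn z'(1)
          by (simp add: monoid.m_assoc[symmetric] group.is_monoid group.r_inv)
      qed
      have "semi_act G act m0 gf n e'' = act (gf m \<otimes>\<^bsub>G\<^esub> z') m0"
        using sa[OF nM wc e''c] using eqX by simp
      also have "act (gf m \<otimes>\<^bsub>G\<^esub> z') m0 = semi_act G act m0 gf m e'"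
        using sa[OF assms(6) z'] by simp
      finally have "semi_act G act m0 gf n e'' \<in> A" using e'(2) by simp
      thus "n \<in> dilation G M act m0 gf A E'"
        unfolding dilation_def using nM \<open>e'' \<in> E'\<close> by blast
    qed
    thus ?thesis by blast
  qed
qed

end
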